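(* Let $\mathcal{U}$ be a dead-ending universe and let $G$ be any finite partizan game. Then $G$ is Left $\mathcal{U}$-strong if and only if $o(G+X)\geq\mathscr{N}$ for all $X\in T_n(\mathcal{U})$, where $n$ is the formal birthday of $G$.
   Context: $o(G)$ is the misère outcome class, ordered $\mathscr{L} > \mathscr{N} > \mathscr{R}$, $\mathscr{L} > \mathscr{P} > \mathscr{R}$. A universe is a set of finite partizan games closed under options, disjunctive sums, conjugates, and forming $\{\mathscr{G}^L\mid\mathscr{G}^R\}$ from nonempty finite subsets of it. A Left end has no Left option; a Left dead-end is a game all of whose subpositions are Left ends (similarly Right). A universe is dead-ending if in every game of it, every subposition that is an end is a dead-end. $G$ is Left $\mathcal{U}$-strong if $o(G+X)\geq\mathscr{N}$ for every Left end $X\in\mathcal{U}$. The formal birthday of $G$ is the height of its game tree. The truncation is $\tau_0(G)=0$, $\tau_{n+1}(G)=\{\tau_n(G^L)\mid\tau_n(G^R)\}$. For Left dead-ends, $G\geq H$ means $o(G+X)\geq o(H+X)$ for all $X$ in every universe. Let $\mathcal{A}$ be the set of Left ends of $\mathcal{U}$ and $\operatorname{cl}(\mathcal{A})$ the smallest set containing $\mathcal{A}$ closed under options and sums; the test set $T_n(\mathcal{U})$ is the set of minimal elements (with respect to $\geq$) of $\{\tau_n(G):G\in\operatorname{cl}(\mathcal{A})\}$. *)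

theory Defs
  imports Main "HOL-Library.FSet"
begin

datatype game = Game (lefts: "game fset") (rights: "game fset")

definition zero_game :: game where
  "zero_game = Game {||} {||}"

text \<open>Disjunctive sum, defined by nested structural recursion.
  sum_aux FL FR H computes G + H where FL = (\<lambda>X. G^L + X) for the Left options
  and FR likewise for the Right options of G.\<close>
primrec sum_aux :: "(game \<Rightarrow> game) fset \<Rightarrow> (game \<Rightarrow> game) fset \<Rightarrow> game \<Rightarrow> game" where
  "sum_aux FL FR (Game HL HR) =
     Game ((\<lambda>f. f (Game HL HR)) |`| FL |\<union>| sum_aux FL FR |`| HL)
          ((\<lambda>f. f (Game HL HR)) |`| FR |\<union>| sum_aux FL FR |`| HR)"

primrec game_sum :: "game \<Rightarrow> game \<Rightarrow> game" where
  "game_sum (Game GL GR) = sum_aux (game_sum |`| GL) (game_sum |`| GR)"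

primrec conj :: "game \<Rightarrow> game" where
  "conj (Game GL GR) = Game (conj |`| GR) (conj |`| GL)"

text \<open>wins G = (Left wins moving first, Right wins moving first), misere play:
  a player who cannot move wins.\<close>
primrec wins :: "game \<Rightarrow> bool \<times> bool" where
  "wins (Game GL GR) =
     ((GL = {||} \<or> (\<exists>p \<in> fset (wins |`| GL). \<not> snd p)),
      (GR = {||} \<or> (\<exists>p \<in> fset (wins |`| GR). \<not> fst p)))"

datatype outcome = oL | oN | oP | oR

definition outcome :: "game \<Rightarrow> outcome" where
  "outcome G = (case wins G of
      (True, False) \<Rightarrow> oL | (True, True) \<Rightarrow> oN
    | (False, False) \<Rightarrow> oP | (False, True) \<Rightarrow> oR)"

definition outcome_le :: "outcome \<Rightarrow> outcome \<Rightarrow> bool" where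
  "outcome_le a b \<longleftrightarrow> a = b \<or> a = oR \<or> b = oL"

definition is_option :: "game \<Rightarrow> game \<Rightarrow> bool" where
  "is_option H G \<longleftrightarrow> H |\<in>| lefts G \<or> H |\<in>| rights G"

definition subposition :: "game \<Rightarrow> game \<Rightarrow> bool" where
  "subposition H G \<longleftrightarrow> is_option\<^sup>*\<^sup>* H G"

definition left_end :: "game \<Rightarrow> bool" where
  "left_end G \<longleftrightarrow> lefts G = {||}"

definition right_end :: "game \<Rightarrow> bool" where
  "right_end G \<longleftrightarrow> rights G = {||}"

definition left_dead_end :: "game \<Rightarrow> bool" where
  "left_dead_end G \<longleftrightarrow> (\<forall>H. subposition H G \<longrightarrow> left_end H)"

definition right_dead_end :: "game \<Rightarrow> bool" where
  "right_dead_end G \<longleftrightarrow> (\<forall>H. subposition H G \<longrightarrow> right_end H)"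

definition universe :: "game set \<Rightarrow> bool" where
  "universe U \<longleftrightarrow>
     (\<forall>G \<in> U. \<forall>H. is_option H G \<longrightarrow> H \<in> U) \<and>
     (\<forall>G \<in> U. \<forall>H \<in> U. game_sum G H \<in> U) \<and>
     (\<forall>G \<in> U. conj G \<in> U) \<and>
     (\<forall>A B. A \<noteq> {||} \<and> B \<noteq> {||} \<and> fset A \<subseteq> U \<and> fset B \<subseteq> U \<longrightarrow> Game A B \<in> U)"

definition dead_ending :: "game set \<Rightarrow> bool" where
  "dead_ending U \<longleftrightarrow>
     (\<forall>G \<in> U. \<forall>H. subposition H G \<longrightarrow>
        (left_end H \<longrightarrow> left_dead_end H) \<and> (right_end H \<longrightarrow> right_dead_end H))"

definition left_strong :: "game set \<Rightarrow> game \<Rightarrow> bool" where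
  "left_strong U G \<longleftrightarrow>
     (\<forall>X \<in> U. left_end X \<longrightarrow> outcome_le oN (outcome (game_sum G X)))"

primrec birthday :: "game \<Rightarrow> nat" where
  "birthday (Game GL GR) =
     Max (insert 0 (Suc ` (fset (birthday |`| GL) \<union> fset (birthday |`| GR))))"

fun trunc :: "nat \<Rightarrow> game \<Rightarrow> game" where
  "trunc 0 G = zero_game"
| "trunc (Suc n) G = Game (trunc n |`| lefts G) (trunc n |`| rights G)"

text \<open>G \<ge> H: o(G+X) \<ge> o(H+X) for all X (in every universe, i.e. for all games).\<close>
definition dead_ge :: "game \<Rightarrow> game \<Rightarrow> bool" where
  "dead_ge G H \<longleftrightarrow> (\<forall>X. outcome_le (outcome (game_sum H X)) (outcome (game_sum G X)))"

inductive_set cl :: "game set \<Rightarrow> game set" for A :: "game set" where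
  base: "G \<in> A \<Longrightarrow> G \<in> cl A"
| opt: "G \<in> cl A \<Longrightarrow> is_option H G \<Longrightarrow> H \<in> cl A"
| add: "G \<in> cl A \<Longrightarrow> H \<in> cl A \<Longrightarrow> game_sum G H \<in> cl A"

definition left_ends_of :: "game set \<Rightarrow> game set" where
  "left_ends_of U = {X \<in> U. left_end X}"

definition test_set :: "nat \<Rightarrow> game set \<Rightarrow> game set" where
  "test_set n U =
     (let S = trunc n ` cl (left_ends_of U)
      in {X \<in> S. \<forall>Y \<in> S. dead_ge X Y \<longrightarrow> dead_ge Y X})"

end

theory Submission
  imports Defs
begin

lemma game_opt_induct:
  assumes "\<And>G. (\<And>g. is_option g G \<Longrightarrow> P g) \<Longrightarrow> P G"
  shows "P G"
proof (induction G)
  case (Game GL GR)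
  then show ?case using assms[of "Game GL GR"] by (auto simp: is_option_def)
qed

lemma game_pair_induct:
  assumes "\<And>G H. (\<And>g. is_option g G \<Longrightarrow> P g H) \<Longrightarrow> (\<And>h. is_option h H \<Longrightarrow> P G h) \<Longrightarrow> P G H"
  shows "P G H"
proof (induction G arbitrary: H rule: game_opt_induct)
  case (1 G)
  note outer = "1.IH"
  show ?case
  proof (induction H rule: game_opt_induct)
    case (1 H)
    then show ?case using assms outer by blast
  qed
qed

lemma lefts_sum: "lefts (game_sum G H) = (\<lambda>g. game_sum g H) |`| lefts G |\<union>| game_sum G |`| lefts H"
  by (cases G; cases H) (simp add: fset.map_comp comp_def)

lemma rights_sum: "rights (game_sum G H) = (\<lambda>g. game_sum g H) |`| rights G |\<union>| game_sum G |`| rights H"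
  by (cases G; cases H) (simp add: fset.map_comp comp_def)

lemma wins_eq: "wins G = ((lefts G = {||} \<or> (\<exists>x. x |\<in>| lefts G \<and> \<not> snd (wins x))),
                       (rights G = {||} \<or> (\<exists>x. x |\<in>| rights G \<and> \<not> fst (wins x))))"
  by (cases G) auto

lemma sum_comm_wins: "wins (game_sum G H) = wins (game_sum H G)"
proof (induction G H rule: game_pair_induct)
  case (1 G H)
  have l: "fst (wins (game_sum G H)) = fst (wins (game_sum H G))"
    apply (subst (1 2) wins_eq)
    using 1 by (auto simp: lefts_sum is_option_def)
  have r: "snd (wins (game_sum G H)) = snd (wins (game_sum H G))"
    apply (subst (1 2) wins_eq)
    using 1 by (auto simp: rights_sum is_option_def)
  show ?case using l r by (simp add: prod_eq_iff)
qed


lemma lde_char: "left_dead_end K \<longleftrightarrow> lefts K = {||} \<and> (\<forall>x. x |\<in>| rights K \<longrightarrow> left_dead_end x)"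
proof
  assume a: "left_dead_end K"
  have "lefts K = {||}" using a by (auto simp: left_dead_end_def left_end_def subposition_def)
  moreover have "left_dead_end x" if "x |\<in>| rights K" for x
    unfolding left_dead_end_def
  proof (intro allI impI)
    fix H assume "subposition H x"
    then have "subposition H K" using that
      by (auto simp: subposition_def is_option_def intro: rtranclp.rtrancl_into_rtrancl)
    then show "left_end H" using a by (auto simp: left_dead_end_def)
  qed
  ultimately show "lefts K = {||} \<and> (\<forall>x. x |\<in>| rights K \<longrightarrow> left_dead_end x)" by blast
next
  assume a: "lefts K = {||} \<and> (\<forall>x. x |\<in>| rights K \<longrightarrow> left_dead_end x)"
  show "left_dead_end K" unfolding left_dead_end_def
  proof (intro allI impI)
    fix H assume "subposition H K"
    then have "H = K \<or> (\<exists>y. is_option\<^sup>*\<^sup>* H y \<and> is_option y K)"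
      unfolding subposition_def by (auto elim: rtranclp.cases)
    then show "left_end H"
    proof
      assume "H = K" then show ?thesis using a by (simp add: left_end_def)
    next
      assume "\<exists>y. is_option\<^sup>*\<^sup>* H y \<and> is_option y K"
      then obtain y where "is_option\<^sup>*\<^sup>* H y" "is_option y K" by blast
      then have "y |\<in>| rights K" using a by (auto simp: is_option_def)
      then have "left_dead_end y" using a by blast
      then show ?thesis using \<open>is_option\<^sup>*\<^sup>* H y\<close> by (auto simp: left_dead_end_def subposition_def)
    qed
  qed
qed

lemma lde_sum: "left_dead_end G \<Longrightarrow> left_dead_end H \<Longrightarrow> left_dead_end (game_sum G H)"
proof (induction G H rule: game_pair_induct)
  case (1 G H)
  show ?case
    apply (subst lde_char)
    using 1 lde_char[of G] lde_char[of H]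
    by (auto simp: lefts_sum rights_sum is_option_def)
qed

lemma birthday_opt: "is_option g G \<Longrightarrow> birthday g < birthday G"
proof (cases G)
  case (Game GL GR)
  assume "is_option g G"
  then have "Suc (birthday g) \<in> insert 0 (Suc ` (fset (birthday |`| GL) \<union> fset (birthday |`| GR)))"
    using Game by (auto simp: is_option_def)
  then have "Suc (birthday g) \<le> birthday G" using Game by (simp del: insert_iff image_iff)
  then show ?thesis by simp
qed

lemma lefts_trunc: "lefts X = {||} \<Longrightarrow> lefts (trunc m X) = {||}"
  by (cases m) (auto simp: zero_game_def)

lemma key:
  "\<forall>X m. left_dead_end X \<longrightarrow>
     (birthday G \<le> m \<longrightarrow> fst (wins (game_sum G X)) = fst (wins (game_sum G (trunc m X)))) \<and>
     (birthday G < m \<longrightarrow> snd (wins (game_sum G X)) = snd (wins (game_sum G (trunc m X))))"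
proof (induction G rule: game_opt_induct)
  case (1 G)
  have A: "fst (wins (game_sum G X)) = fst (wins (game_sum G (trunc m X)))"
    if "left_dead_end X" "birthday G \<le> m" for X m
  proof -
    have lX: "lefts X = {||}" using that lde_char by blast
    have lT: "lefts (trunc m X) = {||}" using lefts_trunc[OF lX] .
    have "\<forall>g. g |\<in>| lefts G \<longrightarrow> snd (wins (game_sum g X)) = snd (wins (game_sum g (trunc m X)))"
    proof (intro allI impI)
      fix g assume "g |\<in>| lefts G"
      then have "is_option g G" by (simp add: is_option_def)
      moreover have "birthday g < m" using birthday_opt[OF \<open>is_option g G\<close>] that by simp
      ultimately show "snd (wins (game_sum g X)) = snd (wins (game_sum g (trunc m X)))"
        using 1[of g] that(1) by blast
    qed
    then show ?thesis
      apply (subst (1 2) wins_eq)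
      by (auto simp: lefts_sum lX lT)
  qed
  have B: "snd (wins (game_sum G X)) = snd (wins (game_sum G (trunc m X)))"
    if ldX: "left_dead_end X" and bm: "birthday G < m" for X m
  proof -
    obtain m' where m: "m = Suc m'" using bm by (cases m) auto
    have rX: "\<forall>x. x |\<in>| rights X \<longrightarrow> left_dead_end x" using ldX lde_char by blast
    have rT: "rights (trunc m X) = trunc m' |`| rights X" using m by simp
    have g: "\<forall>g. g |\<in>| rights G \<longrightarrow> fst (wins (game_sum g X)) = fst (wins (game_sum g (trunc m X)))"
    proof (intro allI impI)
      fix g assume "g |\<in>| rights G"
      then have "is_option g G" by (simp add: is_option_def)
      moreover have "birthday g \<le> m" using birthday_opt[OF \<open>is_option g G\<close>] bm by simp
      ultimately show "fst (wins (game_sum g X)) = fst (wins (game_sum g (trunc m X)))"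
        using 1[of g] ldX by blast
    qed
    have x: "\<forall>x. x |\<in>| rights X \<longrightarrow> fst (wins (game_sum G x)) = fst (wins (game_sum G (trunc m' x)))"
      using A rX bm m by auto
    show ?thesis
      apply (subst (1 2) wins_eq)
      using g x by (auto simp: rights_sum rT)
  qed
  show ?case using A B by blast
qed


fun gdepth :: "nat \<Rightarrow> game set" where
  "gdepth 0 = {zero_game}"
| "gdepth (Suc n) = (\<lambda>(A, B). Game A B) ` ({A. fset A \<subseteq> gdepth n} \<times> {A. fset A \<subseteq> gdepth n})"

lemma finite_fsets: "finite T \<Longrightarrow> finite {A. fset A \<subseteq> T}"
proof -
  assume "finite T"
  have "{A. fset A \<subseteq> T} = fset -` Pow T" by auto
  moreover have "finite (fset -` Pow T)"
    using \<open>finite T\<close> by (intro finite_vimageI) (auto simp: inj_def fset_inject)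
  ultimately show ?thesis by simp
qed

lemma finite_gdepth: "finite (gdepth n)"
  by (induction n) (auto intro!: finite_fsets)

lemma trunc_gdepth: "trunc n G \<in> gdepth n"
proof (induction n arbitrary: G)
  case 0 then show ?case by simp
next
  case (Suc n) then show ?case by auto
qed

lemma min_below:
  fixes R :: "'a \<Rightarrow> 'a \<Rightarrow> bool"
  assumes fin: "finite S" and y0: "y0 \<in> S" and refl: "\<And>x. R x x"
    and trans: "\<And>x y z. R x y \<Longrightarrow> R y z \<Longrightarrow> R x z"
  shows "\<exists>X\<in>S. R y0 X \<and> (\<forall>Y\<in>S. R X Y \<longrightarrow> R Y X)"
proof -
  obtain X where X: "X \<in> S \<and> R y0 X"
    and least: "\<And>Y. Y \<in> S \<and> R y0 Y \<Longrightarrow> card {Z\<in>S. R X Z} \<le> card {Z\<in>S. R Y Z}"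
    using ex_has_least_nat[of "\<lambda>X. X \<in> S \<and> R y0 X" y0 "\<lambda>X. card {Z\<in>S. R X Z}"] y0 refl
    by blast
  have "R Y X" if "Y \<in> S" "R X Y" for Y
  proof -
    have sub: "{Z\<in>S. R Y Z} \<subseteq> {Z\<in>S. R X Z}" using trans that by blast
    have "card {Z\<in>S. R X Z} \<le> card {Z\<in>S. R Y Z}" using least[of Y] X that trans by blast
    then have "{Z\<in>S. R Y Z} = {Z\<in>S. R X Z}" using sub fin
      by (intro card_subset_eq) (auto intro: finite_subset le_antisym card_mono)
    then show ?thesis using X refl by blast
  qed
  then show ?thesis using X by blast
qed

lemma outcome_le_trans: "outcome_le a b \<Longrightarrow> outcome_le b c \<Longrightarrow> outcome_le a c"
  by (cases a; cases b; cases c) (auto simp: outcome_le_def)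

lemma dead_ge_refl: "dead_ge X X"
  by (simp add: dead_ge_def outcome_le_def)

lemma dead_ge_trans: "dead_ge X Y \<Longrightarrow> dead_ge Y Z \<Longrightarrow> dead_ge X Z"
  unfolding dead_ge_def by (meson outcome_le_trans)

lemma geN: "outcome_le oN (outcome H) \<longleftrightarrow> fst (wins H)"
  by (auto simp: outcome_le_def outcome_def split: prod.splits bool.splits)

lemma le_geN: "outcome_le a b \<Longrightarrow> outcome_le oN a \<Longrightarrow> outcome_le oN b"
  using outcome_le_trans by blast

lemma cl_sub:
  assumes "universe U" "dead_ending U"
  shows "H \<in> cl (left_ends_of U) \<Longrightarrow> H \<in> U \<and> left_dead_end H"
proof (induction rule: cl.induct)
  case (base G)
  then show ?case using assms(2) by (auto simp: left_ends_of_def dead_ending_def subposition_def)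
next
  case (opt G H)
  have "H \<in> U" using opt assms(1) by (auto simp: universe_def)
  moreover have "left_dead_end H" using opt lde_char[of G] by (auto simp: is_option_def)
  ultimately show ?case by blast
next
  case (add G H)
  then show ?case using assms(1) lde_sum by (auto simp: universe_def)
qed

theorem mainTheorem4:
  fixes U :: "game set" and G :: game
  assumes "universe U" and "dead_ending U"
  shows "left_strong U G \<longleftrightarrow>
           (\<forall>X \<in> test_set (birthday G) U. outcome_le oN (outcome (game_sum G X)))"
proof
  assume ls: "left_strong U G"
  show "\<forall>X \<in> test_set (birthday G) U. outcome_le oN (outcome (game_sum G X))"
  proof
    fix X assume "X \<in> test_set (birthday G) U"
    then obtain H where H: "H \<in> cl (left_ends_of U)" and X: "X = trunc (birthday G) H"
      unfolding test_set_def Let_def by blast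
    have "H \<in> U" "left_dead_end H" using cl_sub[OF assms H] by auto
    then have "left_end H" using lde_char[of H] unfolding left_end_def by blast
    then have "fst (wins (game_sum G H))" using ls \<open>H \<in> U\<close> unfolding left_strong_def geN by blast
    then show "outcome_le oN (outcome (game_sum G X))"
    proof -
      have "fst (wins (game_sum G H)) = fst (wins (game_sum G (trunc (birthday G) H)))"
        using key[of G] \<open>left_dead_end H\<close> by blast
      then show ?thesis using X \<open>fst (wins (game_sum G H))\<close> unfolding geN by simp
    qed
  qed
next
  assume T: "\<forall>X \<in> test_set (birthday G) U. outcome_le oN (outcome (game_sum G X))"
  show "left_strong U G" unfolding left_strong_def
  proof (intro ballI impI)
    fix Y assume Y: "Y \<in> U" "left_end Y"
    let ?n = "birthday G"
    define S where "S = trunc ?n ` cl (left_ends_of U)"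
    have Ycl: "Y \<in> cl (left_ends_of U)" using Y unfolding left_ends_of_def by (intro cl.base) simp
    have lY: "left_dead_end Y" using cl_sub[OF assms Ycl] by blast
    have finS: "finite S" unfolding S_def
      by (rule finite_subset[OF _ finite_gdepth[of ?n]]) (use trunc_gdepth in blast)
    have y0: "trunc ?n Y \<in> S" using Ycl S_def by blast
    obtain X where X: "X \<in> S" "dead_ge (trunc ?n Y) X" "\<forall>Z\<in>S. dead_ge X Z \<longrightarrow> dead_ge Z X"
      using min_below[OF finS y0, of dead_ge] dead_ge_refl dead_ge_trans by blast
    have "X \<in> test_set ?n U" using X unfolding S_def test_set_def Let_def by blast
    then have "fst (wins (game_sum G X))" using T unfolding geN by blast
    then have "fst (wins (game_sum X G))" by (metis sum_comm_wins)
    then have "fst (wins (game_sum (trunc ?n Y) G))"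
      using X(2) le_geN unfolding dead_ge_def geN[symmetric] by blast
    then have "fst (wins (game_sum G (trunc ?n Y)))" by (metis sum_comm_wins)
    moreover have "fst (wins (game_sum G Y)) = fst (wins (game_sum G (trunc ?n Y)))"
      using key[of G] lY by blast
    ultimately have "fst (wins (game_sum G Y))" by simp
    then show "outcome_le oN (outcome (game_sum G Y))" by (simp add: geN)
  qed
qed

end
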